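(* Every easy pair of words over a finite alphabet can be separated exactly by a 2-state AfA.
   Context: A pair of words $(x,y)$ means two different words over the same finite alphabet $\Sigma$; it is easy if there is $\sigma\in\Sigma$ with $|x|_\sigma\neq|y|_\sigma$, where $|w|_\sigma$ counts occurrences of $\sigma$ in $w$. An $n$-state affine finite automaton (AfA) over $\Sigma$ consists of real $n\times n$ matrices $A_\sigma$ for $\sigma\in\Sigma\cup\{\$\}$ ($\$$ a right end-marker), each of whose columns sums to $1$; an initial vector $v_0\in\mathbb{R}^n$ with entries summing to $1$; and a set $E_a$ of accepting states. On input $w=w_1\cdots w_k$ the final vector is $v_f=A_\$A_{w_k}\cdots A_{w_1}v_0$, and $w$ is accepted with probability $\sum_{j\in E_a}|v_f[j]|\big/\sum_{j=1}^n|v_f[j]|$. A pair is separated exactly if one word is accepted with probability $1$ and the other with probability $0$. *)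

theory Defs
  imports Complex_Main
begin

text \<open>The end-marker is encoded as None,
  a letter s is encoded as Some s.\<close>

definition easy_pair :: "'a set \<Rightarrow> 'a list \<Rightarrow> 'a list \<Rightarrow> bool" where
  "easy_pair Sig x y \<longleftrightarrow> x \<noteq> y \<and> (\<exists>s\<in>Sig. count_list x s \<noteq> count_list y s)"

definition mat_vec :: "nat \<Rightarrow> (nat \<Rightarrow> nat \<Rightarrow> real) \<Rightarrow> (nat \<Rightarrow> real) \<Rightarrow> (nat \<Rightarrow> real)" where
  "mat_vec n M v = (\<lambda>i. \<Sum>j<n. M i j * v j)"

definition is_afa :: "nat \<Rightarrow> 'a set \<Rightarrow> ('a option \<Rightarrow> nat \<Rightarrow> nat \<Rightarrow> real) \<Rightarrow> (nat \<Rightarrow> real) \<Rightarrow> nat set \<Rightarrow> bool" where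
  "is_afa n Sig A v0 E \<longleftrightarrow>
     (\<forall>s \<in> insert None (Some ` Sig). \<forall>j<n. (\<Sum>i<n. A s i j) = 1)
   \<and> (\<Sum>i<n. v0 i) = 1
   \<and> E \<subseteq> {..<n}"

definition afa_final :: "nat \<Rightarrow> ('a option \<Rightarrow> nat \<Rightarrow> nat \<Rightarrow> real) \<Rightarrow> (nat \<Rightarrow> real) \<Rightarrow> 'a list \<Rightarrow> (nat \<Rightarrow> real)" where
  "afa_final n A v0 w = mat_vec n (A None) (foldl (\<lambda>v s. mat_vec n (A (Some s)) v) v0 w)"

definition afa_accept_prob :: "nat \<Rightarrow> ('a option \<Rightarrow> nat \<Rightarrow> nat \<Rightarrow> real) \<Rightarrow> (nat \<Rightarrow> real) \<Rightarrow> nat set \<Rightarrow> 'a list \<Rightarrow> real" where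
  "afa_accept_prob n A v0 E w =
     (let vf = afa_final n A v0 w in (\<Sum>j\<in>E. \<bar>vf j\<bar>) / (\<Sum>j<n. \<bar>vf j\<bar>))"

definition separates_exactly :: "nat \<Rightarrow> ('a option \<Rightarrow> nat \<Rightarrow> nat \<Rightarrow> real) \<Rightarrow> (nat \<Rightarrow> real) \<Rightarrow> nat set \<Rightarrow> 'a list \<Rightarrow> 'a list \<Rightarrow> bool" where
  "separates_exactly n A v0 E x y \<longleftrightarrow>
     (afa_accept_prob n A v0 E x = 1 \<and> afa_accept_prob n A v0 E y = 0)
   \<or> (afa_accept_prob n A v0 E x = 0 \<and> afa_accept_prob n A v0 E y = 1)"

end

theory Submission
  imports Defs
begin

definition vec2 :: "real \<Rightarrow> nat \<Rightarrow> real" where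
  "vec2 k = (\<lambda>i. if i = 0 then 1 - k else if i = 1 then k else 0)"

definition stepM :: "'a \<Rightarrow> 'a option \<Rightarrow> real \<Rightarrow> real \<Rightarrow> nat \<Rightarrow> nat \<Rightarrow> real" where
  "stepM c s al be = (case s of
     Some t \<Rightarrow> (if t = c then (\<lambda>i j. if i=0 \<and> j=1 then -1 else if i=1 \<and> j=0 then 1
                               else if i=1 \<and> j=1 then 2 else 0)
              else (\<lambda>i j. if i = j \<and> i < 2 then 1 else 0))
   | None \<Rightarrow> (\<lambda>i j. if i=0 then (if j=0 then al else if j=1 then be else 0)
                 else if i=1 then (if j=0 then 1-al else if j=1 then 1-be else 0) else 0))"

lemma sum2: "(\<Sum>j<(2::nat). f j) = f 0 + (f 1 :: real)"
  by (simp add: numeral_2_eq_2)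

lemma step_vec: "mat_vec 2 (stepM c (Some s) al be) (vec2 k) = vec2 (k + (if s = c then 1 else 0))"
  by (rule ext) (auto simp: mat_vec_def sum2 stepM_def vec2_def)

lemma end_vec: "mat_vec 2 (stepM c None al be) (vec2 k) = vec2 (1 - (al*(1-k) + be*k))"
proof (rule ext)
  fix i :: nat
  show "mat_vec 2 (stepM c None al be) (vec2 k) i = vec2 (1 - (al*(1-k) + be*k)) i"
    by (cases "i = 0"; cases "i = 1") (simp_all add: mat_vec_def sum2 stepM_def vec2_def algebra_simps)
qed

lemma fold_vec: "foldl (\<lambda>v s. mat_vec 2 (stepM c (Some s) al be) v) (vec2 k) w
   = vec2 (k + real (count_list w c))"
  by (induction w arbitrary: k) (auto simp: step_vec algebra_simps)

theorem mainTheorem8: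
  fixes Sig :: "'a set" and x y :: "'a list"
  assumes "finite Sig" and "x \<in> lists Sig" and "y \<in> lists Sig"
    and "easy_pair Sig x y"
  shows "\<exists>A v0 E. is_afa 2 Sig A v0 E \<and> separates_exactly 2 A v0 E x y"
proof -
  obtain c where c: "count_list x c \<noteq> count_list y c"
    using assms(4) unfolding easy_pair_def by blast
  define a where "a = real (count_list x c)"
  define b where "b = real (count_list y c)"
  have ab: "b - a \<noteq> 0" using c unfolding a_def b_def by simp
  define al where "al = - a / (b - a)"
  define be where "be = (1 - a) / (b - a)"
  define A where "A = (\<lambda>s. stepM c s al be)"
  have fin: "\<And>w. afa_final 2 A (vec2 0) w = vec2 (1 - (al*(1 - real (count_list w c)) + be * real (count_list w c)))"
    unfolding afa_final_def A_def by (simp add: fold_vec end_vec)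
  have pa: "al*(1-a) + be*a = 0" unfolding al_def be_def using ab
    by (simp add: field_simps)
  have pb: "al*(1-b) + be*b = 1" unfolding al_def be_def using ab
    by (simp add: divide_simps) (simp add: algebra_simps)
  have px: "afa_accept_prob 2 A (vec2 0) {1} x = 1"
    unfolding afa_accept_prob_def Let_def fin using pa
    by (simp add: a_def sum2 vec2_def)
  have py: "afa_accept_prob 2 A (vec2 0) {1} y = 0"
    unfolding afa_accept_prob_def Let_def fin using pb
    by (simp add: b_def sum2 vec2_def)
  have afa: "is_afa 2 Sig A (vec2 0) {1}"
    unfolding is_afa_def A_def
    by (auto simp: sum2 vec2_def stepM_def less_2_cases_iff)
  show ?thesis using afa px py unfolding separates_exactly_def by blast
qed

end
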